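(* Assume the zero-derivation setting $\delta=0$ and write $\mathbb{F}_{q^m}[x;\theta]$ for the skew polynomial ring. Let $s\ge1$, $\boldsymbol\xi=(\xi_1,\dots,\xi_\ell)$ representatives of pairwise distinct nontrivial conjugacy classes, $\mathbf n$ a length partition of $n$, $\boldsymbol\beta_1,\dots,\boldsymbol\beta_s\in\mathbb{F}_{q^m}^n$ with each block having $\mathbb{F}_q$-linearly independent entries, and $\mathbf c$ a codeword of the corresponding HILRS code of interleaving order $s$ and dimension $sk$ with message-polynomial vector $(f_1,\dots,f_s)$. Let $\mathbf y=\mathbf c+\mathbf e$ with $\mathrm{wt}_{\Sigma R}(\mathbf e)=t\le\frac{s}{s+1}(n-k)$, let $\sigma$ be the error-span polynomial of $\mathbf e$, and let $G_j,R_j$ ($j=1,\dots,s$) be the minimal and interpolation polynomials defined in the context. Let $\chi_1,\dots,\chi_s\in\mathbb{F}_{q^m}[x;\theta]$ be the skew polynomials with $\sigma f_j=\chi_jG_j+\sigma R_j$ for all $j$. Put $$\mathbf W=\begin{pmatrix}-\mathbf I_s\\ \mathbf R\\ \mathbf G\end{pmatrix}\in\mathbb{F}_{q^m}[x;\theta]^{(2s+1)\times s},\quad \mathbf R=(R_1,\dots,R_s),\ \mathbf G=\mathrm{diag}(G_1,\dots,G_s),$$ $\boldsymbol\rho=(\sigma f_1,\dots,\sigma f_s,\sigma)$, $\boldsymbol\chi=(\chi_1,\dots,\chi_s)$, $\mathbf w=(0,\dots,0,k-1)\in\mathbb Z^{s+1}$, $\mathbf v=(0,\dots,0,k-1,0,\dots,0)\in\mathbb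 Z^{2s+1}$ (the entry $k-1$ in position $s+1$), $D=\frac{s}{s+1}(n-k)$ and $d=D+n$. Then $$(\boldsymbol\rho\mid\boldsymbol\chi)\mathbf W=\mathbf 0\ \text{ and }\ \mathrm{rdeg}_{\mathbf w}(\boldsymbol\rho)<D$$ if and only if $$(\boldsymbol\rho\mid\boldsymbol\chi)\mathbf W\equiv\mathbf 0\bmod_r x^d\ \text{ and }\ \mathrm{rdeg}_{\mathbf v}(\boldsymbol\rho\mid\boldsymbol\chi)<D.$$
   Context: $q$ a prime power, $m\ge1$, $\theta$ an automorphism of $\mathbb{F}_{q^m}$ with fixed field $\mathbb{F}_q$. $\mathbb{F}_{q^m}[x;\theta]$: skew polynomials $\sum_if_ix^{i-1}$ with multiplication rule $xa=\theta(a)x$. Elements $a,b$ are conjugate if $b=\theta(c)ac^{-1}$ for some $c\ne0$; the class of $0$ is trivial. Generalized operator evaluation: $\mathcal D_a(b)=\theta(b)a$, $\mathcal D_a^0(b)=b$, $\mathcal D_a^i=\mathcal D_a\circ\mathcal D_a^{i-1}$, $f(b)_a=\sum_if_i\mathcal D_a^{i-1}(b)$; a length partition $\mathbf n=(n_1,\dots,n_\ell)$ of $n$ splits vectors into blocks $\mathbf x^{(i)}\in\mathbb{F}_{q^m}^{n_i}$, and $f(\mathbf x)_{\mathbf a}=(f(\mathbf x^{(1)})_{a_1}\mid\dots\mid f(\mathbf x^{(\ell)})_{a_\ell})$ entrywise. HILRS code: all $(\mathbf c_1\mid\dots\mid\mathbf c_s)\in\mathbb{F}_{q^m}^{sn}$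 with $\mathbf c_j=f_j(\boldsymbol\beta_j)_{\boldsymbol\xi}$ for some $f_j$ of degree $<k$; $(f_1,\dots,f_s)$ is the message-polynomial vector. Sum-rank weight of $\mathbf x=(\mathbf x_1\mid\dots\mid\mathbf x_s)$: $\sum_i\mathrm{rk}_q(\mathbf x_1^{(i)}\mid\dots\mid\mathbf x_s^{(i)})$ ($\mathrm{rk}_q$ = max number of $\mathbb{F}_q$-linearly independent entries). Error values: with $t_i=\mathrm{rk}_q(\mathbf e_1^{(i)}\mid\dots\mid\mathbf e_s^{(i)})$, choose $\mathbf a^{(i)}\in\mathbb{F}_{q^m}^{t_i}$ with $\mathbb{F}_q$-linearly independent entries and $\mathbf B_j^{(i)}\in\mathbb{F}_q^{t_i\times n_i}$ with $\mathbf e_j^{(i)}=\mathbf a^{(i)}\mathbf B_j^{(i)}$ and $\mathrm{rk}(\mathbf B_1^{(i)}\mid\dots\mid\mathbf B_s^{(i)})=t_i$; the error-span polynomial $\sigma$ is the monic nonzero skew polynomial of least degree with $\sigma(\mathbf a^{(i)})_{\xi_i}=\mathbf 0$ for all $i$. $G_j$ is the monic nonzero skew polynomial of least degree with $G_j(\boldsymbol\beta_j)_{\boldsymbol\xi}=\mathbf 0$; $R_j$ is the unique skew polynomial of degree $<n$ with $R_j(\boldsymbol\beta_j)_{\boldsymbol\xi}=\mathbf y_j$. For a shift $\mathbf v\in\mathbb Z^a$ and $\mathbf b\in\mathbb{F}_{q^m}[x;\theta]^a$, the $\mathbf v$-shifted row degree is $\mathrm{rdeg}_{\mathbf v}(\mathbf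 b)=\max_j(\deg b_j+v_j)$ (with $\deg 0=-\infty$). For a vector, $\equiv\mathbf 0\bmod_r x^d$ means every entry has remainder $0$ upon right division by $x^d$. *)

theory Defs
  imports "HOL-Computational_Algebra.Polynomial" "HOL-Library.Extended_Real"
begin

(* Field automorphism theta of F_{q^m}; F_q is its fixed field {a. theta a = a}. *)
definition field_aut :: "('a::field \<Rightarrow> 'a) \<Rightarrow> bool" where
  "field_aut \<theta> \<longleftrightarrow> bij \<theta> \<and> (\<forall>a b. \<theta> (a + b) = \<theta> a + \<theta> b) \<and> (\<forall>a b. \<theta> (a * b) = \<theta> a * \<theta> b)"

(* Skew polynomials F_{q^m}[x;theta] (derivation delta = 0): carried by 'a poly
   (coefficient representation), with the skew product  x a = theta(a) x. *)
definition skew_mult :: "('a::field \<Rightarrow> 'a) \<Rightarrow> 'a poly \<Rightarrow> 'a poly \<Rightarrow> 'a poly" where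
  "skew_mult \<theta> p q = (\<Sum>i\<le>degree p. \<Sum>j\<le>degree q.
      monom (coeff p i * (\<theta> ^^ i) (coeff q j)) (i + j))"

definition conjugate :: "('a::field \<Rightarrow> 'a) \<Rightarrow> 'a \<Rightarrow> 'a \<Rightarrow> bool" where
  "conjugate \<theta> a b \<longleftrightarrow> (\<exists>c. c \<noteq> 0 \<and> b = \<theta> c * a * inverse c)"

definition op_eval :: "('a::field \<Rightarrow> 'a) \<Rightarrow> 'a poly \<Rightarrow> 'a \<Rightarrow> 'a \<Rightarrow> 'a" where
  "op_eval \<theta> f a b = (\<Sum>i\<le>degree f. coeff f i * ((\<lambda>c. \<theta> c * a) ^^ i) b)"

definition Fq_indep :: "('a::field \<Rightarrow> 'a) \<Rightarrow> ('i \<Rightarrow> 'a) \<Rightarrow> 'i set \<Rightarrow> bool" where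
  "Fq_indep \<theta> v J \<longleftrightarrow> (\<forall>c. (\<forall>x\<in>J. \<theta> (c x) = c x) \<longrightarrow> (\<Sum>x\<in>J. c x * v x) = 0 \<longrightarrow> (\<forall>x\<in>J. c x = 0))"

definition Fq_indep_vec :: "('a::field \<Rightarrow> 'a) \<Rightarrow> ('i \<Rightarrow> 'k \<Rightarrow> 'a) \<Rightarrow> 'i set \<Rightarrow> 'k set \<Rightarrow> bool" where
  "Fq_indep_vec \<theta> v J K \<longleftrightarrow> (\<forall>c. (\<forall>x\<in>J. \<theta> (c x) = c x) \<longrightarrow>
      (\<forall>k\<in>K. (\<Sum>x\<in>J. c x * v x k) = 0) \<longrightarrow> (\<forall>x\<in>J. c x = 0))"

definition rkq :: "('a::field \<Rightarrow> 'a) \<Rightarrow> ('i \<Rightarrow> 'a) \<Rightarrow> 'i set \<Rightarrow> nat" where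
  "rkq \<theta> v I = Max {card J | J. J \<subseteq> I \<and> Fq_indep \<theta> v J}"

definition mat_rank_Fq :: "('a::field \<Rightarrow> 'a) \<Rightarrow> (nat \<Rightarrow> 'k \<Rightarrow> 'a) \<Rightarrow> nat \<Rightarrow> 'k set \<Rightarrow> nat" where
  "mat_rank_Fq \<theta> M rows K = Max {card J | J. J \<subseteq> {..<rows} \<and> Fq_indep_vec \<theta> M J K}"

(* Vectors (x_1|...|x_s) in F^{sn} are represented as x j i p = p-th entry of block i of x_j,
   (j < s, i < l, p < nn i).  rk_q of the i-th block (x_1^(i)|...|x_s^(i)): *)
definition block_rank :: "('a::field \<Rightarrow> 'a) \<Rightarrow> nat \<Rightarrow> (nat \<Rightarrow> nat) \<Rightarrow> (nat \<Rightarrow> nat \<Rightarrow> nat \<Rightarrow> 'a) \<Rightarrow> nat \<Rightarrow> nat" where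
  "block_rank \<theta> s nn x i = rkq \<theta> (\<lambda>(j, p). x j i p) ({..<s} \<times> {..<nn i})"

definition sumrank_wt :: "('a::field \<Rightarrow> 'a) \<Rightarrow> nat \<Rightarrow> nat \<Rightarrow> (nat \<Rightarrow> nat) \<Rightarrow> (nat \<Rightarrow> nat \<Rightarrow> nat \<Rightarrow> 'a) \<Rightarrow> nat" where
  "sumrank_wt \<theta> s l nn x = (\<Sum>i<l. block_rank \<theta> s nn x i)"

definition rdeg :: "int list \<Rightarrow> 'a::zero poly list \<Rightarrow> ereal" where
  "rdeg v b = (MAX j\<in>{..<length b}.
      (if b ! j = 0 then -\<infinity> else ereal (of_int (int (degree (b ! j)) + v ! j))))"

definition vec_mat :: "('a::field \<Rightarrow> 'a) \<Rightarrow> 'a poly list \<Rightarrow> (nat \<Rightarrow> nat \<Rightarrow> 'a poly) \<Rightarrow> nat \<Rightarrow> 'a poly list" where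
  "vec_mat \<theta> r W cols = map (\<lambda>j. \<Sum>i<length r. skew_mult \<theta> (r ! i) (W i j)) [0..<cols]"

definition mod_r_zero :: "('a::field \<Rightarrow> 'a) \<Rightarrow> 'a poly \<Rightarrow> nat \<Rightarrow> bool" where
  "mod_r_zero \<theta> p N \<longleftrightarrow> (\<exists>g. p = skew_mult \<theta> g (monom 1 N))"

definition Wmat :: "nat \<Rightarrow> (nat \<Rightarrow> 'a::comm_ring_1 poly) \<Rightarrow> (nat \<Rightarrow> 'a poly) \<Rightarrow> nat \<Rightarrow> nat \<Rightarrow> 'a poly" where
  "Wmat s R G i j =
     (if i < s then (if i = j then -1 else 0)
      else if i = s then R j
      else (if i - s - 1 = j then G j else 0))"

end

theory Submission
  imports Defs
begin

context
  fixes \<theta> :: "'a::field \<Rightarrow> 'a"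
  assumes aut: "field_aut \<theta>"
begin

lemma th_add: "\<theta> (x + y) = \<theta> x + \<theta> y" using aut by (simp add: field_aut_def)
lemma th_mult: "\<theta> (x * y) = \<theta> x * \<theta> y" using aut by (simp add: field_aut_def)
lemma th_inj: "inj \<theta>" using aut by (simp add: field_aut_def bij_def)
lemma th_0: "\<theta> 0 = 0"
proof -
  have "\<theta> (0 + 0) = \<theta> 0 + \<theta> 0" by (rule th_add)
  then show ?thesis by (metis add.right_neutral add_left_cancel)
qed
lemma th_eq0: "\<theta> x = 0 \<longleftrightarrow> x = 0"
  using th_inj th_0 by (metis injD)
lemma th_1: "\<theta> 1 = 1"
proof -
  have "\<theta> (1 * 1) = \<theta> 1 * \<theta> 1" by (rule th_mult)
  moreover have "\<theta> 1 \<noteq> 0" using th_eq0 by simp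
  ultimately show ?thesis by simp
qed
lemma th_neg: "\<theta> (- x) = - \<theta> x"
proof -
  have "\<theta> x + \<theta> (- x) = 0" using th_add[of x "- x"] th_0 by simp
  then show ?thesis by (metis minus_unique)
qed
lemma th_inv: "\<theta> (inverse x) = inverse (\<theta> x)"
proof (cases "x = 0")
  case True then show ?thesis using th_0 by simp
next
  case False
  have "\<theta> (x * inverse x) = \<theta> x * \<theta> (inverse x)" by (rule th_mult)
  then have "\<theta> x * \<theta> (inverse x) = 1" using False th_1 by simp
  then show ?thesis by (metis inverse_unique)
qed

lemma th_divide: "\<theta> (x / y) = \<theta> x / \<theta> y"
  by (simp add: divide_inverse th_mult th_inv)

lemma thi_add: "(\<theta> ^^ i) (x + y) = (\<theta> ^^ i) x + (\<theta> ^^ i) y"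
  by (induction i) (simp_all add: th_add)
lemma thi_mult: "(\<theta> ^^ i) (x * y) = (\<theta> ^^ i) x * (\<theta> ^^ i) y"
  by (induction i) (simp_all add: th_mult)
lemma thi_0: "(\<theta> ^^ i) 0 = 0"
  by (induction i) (simp_all add: th_0)
lemma thi_1: "(\<theta> ^^ i) 1 = 1"
  by (induction i) (simp_all add: th_1)
lemma thi_neg: "(\<theta> ^^ i) (- x) = - (\<theta> ^^ i) x"
  by (induction i) (simp_all add: th_neg)
lemma thi_eq0: "(\<theta> ^^ i) x = 0 \<longleftrightarrow> x = 0"
  by (induction i) (simp_all add: th_eq0)

lemma map_th_add: "map_poly (\<theta> ^^ i) (p + q) = map_poly (\<theta> ^^ i) p + map_poly (\<theta> ^^ i) q"
  by (intro poly_eqI) (simp add: coeff_map_poly thi_0 thi_add)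
lemma map_th_neg1: "map_poly (\<theta> ^^ i) (- 1) = - 1"
  by (intro poly_eqI) (simp add: coeff_map_poly thi_0 thi_neg thi_1 coeff_1)
lemma map_th_degree: "degree (map_poly (\<theta> ^^ i) p) = degree p"
  by (rule degree_map_poly) (simp add: thi_eq0)
lemma map_th_eq0: "map_poly (\<theta> ^^ i) p = 0 \<longleftrightarrow> p = 0"
  by (rule map_poly_eq_0_iff) (simp_all add: thi_eq0 thi_0)

lemma pCons0_sum: "pCons 0 (\<Sum>i\<in>A. f i) = (\<Sum>i\<in>A. pCons 0 (f i))"
  by (induction A rule: infinite_finite_induct) (simp_all, metis add_pCons add.right_neutral)

lemma skew_alt:
  assumes "degree p \<le> N"
  shows "skew_mult \<theta> p q = (\<Sum>i\<le>N. monom (coeff p i) i * map_poly (\<theta> ^^ i) q)"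
proof -
  have inner: "(\<Sum>j\<le>degree q. monom (coeff p i * (\<theta> ^^ i) (coeff q j)) (i + j))
      = monom (coeff p i) i * map_poly (\<theta> ^^ i) q" for i
  proof -
    have "map_poly (\<theta> ^^ i) q = (\<Sum>j\<le>degree q. monom (coeff (map_poly (\<theta> ^^ i) q) j) j)"
      by (rule poly_as_sum_of_monoms'[symmetric]) (simp add: map_th_degree)
    then have "monom (coeff p i) i * map_poly (\<theta> ^^ i) q
       = (\<Sum>j\<le>degree q. monom (coeff p i) i * monom ((\<theta> ^^ i) (coeff q j)) j)"
      by (simp add: sum_distrib_left coeff_map_poly thi_0)
    then show ?thesis by (simp add: mult_monom)
  qed
  have "skew_mult \<theta> p q = (\<Sum>i\<le>degree p. monom (coeff p i) i * map_poly (\<theta> ^^ i) q)"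
    unfolding skew_mult_def using inner by simp
  also have "\<dots> = (\<Sum>i\<le>N. monom (coeff p i) i * map_poly (\<theta> ^^ i) q)"
    by (rule sum.mono_neutral_left) (use assms in \<open>auto simp: coeff_eq_0\<close>)
  finally show ?thesis .
qed

lemma skew_0_left [simp]: "skew_mult \<theta> 0 q = 0"
  by (simp add: skew_mult_def)

lemma skew_pCons: "skew_mult \<theta> (pCons c p) q = smult c q + pCons 0 (skew_mult \<theta> p (map_poly \<theta> q))"
proof -
  have "skew_mult \<theta> (pCons c p) q = (\<Sum>i\<le>Suc (degree p). monom (coeff (pCons c p) i) i * map_poly (\<theta> ^^ i) q)"
    by (rule skew_alt) (simp add: degree_pCons_le)
  also have "\<dots> = smult c q + (\<Sum>i\<le>degree p. monom (coeff p i) (Suc i) * map_poly (\<theta> ^^ Suc i) q)"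
    by (subst sum.atMost_Suc_shift) (simp add: monom_0)
  also have "(\<Sum>i\<le>degree p. monom (coeff p i) (Suc i) * map_poly (\<theta> ^^ Suc i) q)
     = pCons 0 (\<Sum>i\<le>degree p. monom (coeff p i) i * map_poly (\<theta> ^^ i) (map_poly \<theta> q))"
  proof -
    have "map_poly (\<theta> ^^ Suc i) q = map_poly (\<theta> ^^ i) (map_poly \<theta> q)" for i
      by (simp add: map_poly_map_poly thi_0 th_0 funpow_Suc_right del: funpow.simps)
    then show ?thesis by (simp add: monom_Suc pCons0_sum sum_distrib_left mult.assoc del: funpow.simps)
  qed
  also have "(\<Sum>i\<le>degree p. monom (coeff p i) i * map_poly (\<theta> ^^ i) (map_poly \<theta> q)) = skew_mult \<theta> p (map_poly \<theta> q)"
    by (rule skew_alt[symmetric]) simp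
  finally show ?thesis .
qed

lemma map_th1_add: "map_poly \<theta> (p + q) = map_poly \<theta> p + map_poly \<theta> q"
  using map_th_add[of 1] by simp
lemma map_th1_neg1: "map_poly \<theta> (- 1) = - 1"
  using map_th_neg1[of 1] by simp
lemma map_th1_degree: "degree (map_poly \<theta> p) = degree p"
  using map_th_degree[of 1] by simp
lemma map_th1_eq0: "map_poly \<theta> p = 0 \<longleftrightarrow> p = 0"
  using map_th_eq0[of 1] by simp

lemma skew_0_right [simp]: "skew_mult \<theta> p 0 = 0"
  by (induction p) (simp_all add: skew_pCons)

lemma pCons0_add: "pCons 0 (x + y) = pCons 0 x + pCons (0::'b::comm_monoid_add) y"
  by (metis add_pCons add_0)

lemma skew_add_right: "skew_mult \<theta> p (q1 + q2) = skew_mult \<theta> p q1 + skew_mult \<theta> p q2"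
proof (induction p arbitrary: q1 q2)
  case 0 then show ?case by simp
next
  case (pCons c p)
  then show ?case by (simp add: skew_pCons map_th1_add smult_add_right pCons0_add add_ac del: add_pCons)
qed

lemma skew_neg1: "skew_mult \<theta> p (- 1) = - p"
  by (induction p) (simp_all add: skew_pCons map_th1_neg1)

lemma skew_add_left: "skew_mult \<theta> (p1 + p2) q = skew_mult \<theta> p1 q + skew_mult \<theta> p2 q"
proof (induction p1 p2 arbitrary: q rule: poly_induct2)
  case 0 then show ?case by simp
next
  case (pCons a p b r)
  then show ?case by (simp only: add_pCons skew_pCons) (simp add: smult_add_left pCons0_add add_ac del: add_pCons)
qed

lemma skew_monom: "skew_mult \<theta> (monom a e) q = monom a e * map_poly (\<theta> ^^ e) q"
proof (induction e arbitrary: q)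
  case 0 then show ?case by (simp add: monom_0 skew_pCons)
next
  case (Suc e)
  have "map_poly (\<theta> ^^ Suc e) q = map_poly (\<theta> ^^ e) (map_poly \<theta> q)"
    by (simp add: map_poly_map_poly thi_0 th_0 funpow_Suc_right del: funpow.simps)
  then show ?case using Suc by (simp add: monom_Suc skew_pCons del: funpow.simps)
qed

lemma skew_degree: "p \<noteq> 0 \<Longrightarrow> q \<noteq> 0 \<Longrightarrow>
   skew_mult \<theta> p q \<noteq> 0 \<and> degree (skew_mult \<theta> p q) = degree p + degree q"
proof (induction p arbitrary: q)
  case 0 then show ?case by simp
next
  case (pCons c p)
  show ?case
  proof (cases "p = 0")
    case True
    then have "c \<noteq> 0" using pCons by simp
    then show ?thesis using True pCons by (simp add: skew_pCons)
  next
    case False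
    have q': "map_poly \<theta> q \<noteq> 0" using pCons map_th1_eq0 by simp
    from pCons.IH[OF False q'] have S: "skew_mult \<theta> p (map_poly \<theta> q) \<noteq> 0"
      "degree (skew_mult \<theta> p (map_poly \<theta> q)) = degree p + degree q"
      by (simp_all add: map_th1_degree)
    let ?S = "pCons 0 (skew_mult \<theta> p (map_poly \<theta> q))"
    have dS: "degree ?S = Suc (degree p + degree q)" using S by simp
    have "degree (smult c q) < degree ?S" using dS degree_smult_le[of c q] by simp
    then have "degree (smult c q + ?S) = degree ?S" by (rule degree_add_eq_right)
    then show ?thesis using dS False by (auto simp: skew_pCons)
  qed
qed

lemma Di_0: "((\<lambda>c. \<theta> c * a) ^^ i) 0 = 0"
  by (induction i) (simp_all add: th_0)

lemma op_eval_N: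
  assumes "degree f \<le> N"
  shows "op_eval \<theta> f a b = (\<Sum>i\<le>N. coeff f i * ((\<lambda>c. \<theta> c * a) ^^ i) b)"
  unfolding op_eval_def
  by (rule sum.mono_neutral_left) (use assms in \<open>auto simp: coeff_eq_0\<close>)

lemma op_eval_0 [simp]: "op_eval \<theta> 0 a b = 0"
  by (simp add: op_eval_def)

lemma op_eval_add: "op_eval \<theta> (f + g) a b = op_eval \<theta> f a b + op_eval \<theta> g a b"
proof -
  let ?N = "max (degree f) (degree g)"
  have "degree (f + g) \<le> ?N" by (rule degree_add_le_max)
  then show ?thesis
    by (simp add: op_eval_N[of _ ?N] distrib_right sum.distrib)
qed

lemma op_eval_smult: "op_eval \<theta> (smult c f) a b = c * op_eval \<theta> f a b"
  using degree_smult_le[of c f]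
  by (simp add: op_eval_N[of _ "degree f"] sum_distrib_left mult.assoc)

lemma op_eval_pCons: "op_eval \<theta> (pCons c p) a b = c * b + op_eval \<theta> p a (\<theta> b * a)"
proof -
  have "op_eval \<theta> (pCons c p) a b = (\<Sum>i\<le>Suc (degree p). coeff (pCons c p) i * ((\<lambda>c. \<theta> c * a) ^^ i) b)"
    by (rule op_eval_N) (simp add: degree_pCons_le)
  also have "\<dots> = c * b + (\<Sum>i\<le>degree p. coeff p i * ((\<lambda>c. \<theta> c * a) ^^ i) (\<theta> b * a))"
    by (subst sum.atMost_Suc_shift) (simp add: funpow_Suc_right del: funpow.simps)
  also have "(\<Sum>i\<le>degree p. coeff p i * ((\<lambda>c. \<theta> c * a) ^^ i) (\<theta> b * a)) = op_eval \<theta> p a (\<theta> b * a)"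
    by (simp add: op_eval_def)
  finally show ?thesis .
qed

lemma op_eval_map: "op_eval \<theta> (map_poly \<theta> q) a (\<theta> b * a) = \<theta> (op_eval \<theta> q a b) * a"
proof (induction q arbitrary: b)
  case 0 then show ?case by (simp add: th_0)
next
  case (pCons d q)
  have "op_eval \<theta> (map_poly \<theta> q) a (\<theta> (\<theta> b * a) * a) = \<theta> (op_eval \<theta> q a (\<theta> b * a)) * a"
    by (rule pCons.IH)
  then show ?case
    by (simp add: map_poly_pCons th_0 op_eval_pCons th_add th_mult distrib_right mult.assoc)
qed

lemma op_eval_skew: "op_eval \<theta> (skew_mult \<theta> p q) a b = op_eval \<theta> p a (op_eval \<theta> q a b)"
proof (induction p arbitrary: q b)
  case 0 then show ?case by simp
next
  case (pCons c p)
  then show ?case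
    by (simp add: skew_pCons op_eval_add op_eval_smult op_eval_pCons op_eval_map)
qed

lemma th_sum: "\<theta> (\<Sum>x\<in>A. f x) = (\<Sum>x\<in>A. \<theta> (f x))"
  by (induction A rule: infinite_finite_induct) (simp_all add: th_0 th_add)

lemma op_eval_zero_arg [simp]: "op_eval \<theta> g a 0 = 0"
  by (simp add: op_eval_def Di_0)

lemma op_eval_const: "op_eval \<theta> [:r:] a b = r * b"
  by (simp add: op_eval_pCons)

lemma op_eval_X: "op_eval \<theta> (pCons (- c) 1) a w = - c * w + \<theta> w * a"
  by (simp add: op_eval_pCons one_pCons)

lemma skew_div_lin: "\<exists>h r. g = skew_mult \<theta> h (pCons (- c) 1) + [:r:]"
proof (induction "degree g" arbitrary: g rule: less_induct)
  case less
  let ?X = "pCons (- c) (1::'a poly)"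
  show ?case
  proof (cases "degree g = 0")
    case True
    then have "g = [:coeff g 0:]" by (metis degree_0_id)
    then have "g = skew_mult \<theta> 0 ?X + [:coeff g 0:]" by simp
    then show ?thesis by blast
  next
    case False
    define d where "d = degree g"
    define e where "e = d - 1"
    have de: "d = Suc e" using False unfolding d_def e_def by simp
    define M where "M = monom (lead_coeff g) e"
    have MX: "map_poly (\<theta> ^^ e) ?X = pCons (- (\<theta> ^^ e) c) 1"
      by (simp add: map_poly_pCons thi_0 thi_neg one_pCons thi_1 del: funpow.simps)
    have P: "skew_mult \<theta> M ?X = M * pCons (- (\<theta> ^^ e) c) 1"
      unfolding M_def by (simp add: skew_monom MX del: funpow.simps)
    have dP: "degree (skew_mult \<theta> M ?X) \<le> d"
    proof -
      have "degree (M * pCons (- (\<theta> ^^ e) c) 1) \<le> degree M + degree (pCons (- (\<theta> ^^ e) c) (1::'a poly))"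
        by (rule degree_mult_le)
      also have "\<dots> \<le> e + 1" unfolding M_def using degree_monom_le[of "lead_coeff g" e] by simp
      finally show ?thesis using P de by simp
    qed
    have cP: "coeff (skew_mult \<theta> M ?X) d = lead_coeff g"
      using P de unfolding M_def by (simp add: coeff_monom_mult d_def)
    define g' where "g' = g - skew_mult \<theta> M ?X"
    have "degree g' \<le> d" unfolding g'_def using dP d_def
      by (meson degree_diff_le le_refl)
    moreover have "coeff g' d = 0" unfolding g'_def using cP d_def by simp
    ultimately have "degree g' < degree g"
    proof (cases "g' = 0")
      case True then show ?thesis using False by simp
    next
      case False
      then have "degree g' \<noteq> d" using \<open>coeff g' d = 0\<close> by auto
      then show ?thesis using \<open>degree g' \<le> d\<close> d_def by simp
    qed
    then obtain h r where hr: "g' = skew_mult \<theta> h ?X + [:r:]" using less by blast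
    have "g = skew_mult \<theta> (h + M) ?X + [:r:]"
      using hr unfolding g'_def by (simp add: skew_add_left algebra_simps)
    then show ?thesis by blast
  qed
qed

lemma indep_nz: fixes v :: "nat \<Rightarrow> 'a" assumes "Fq_indep \<theta> v {..<m}" "0 < m" shows "v 0 \<noteq> 0"
proof
  assume v0: "v 0 = 0"
  define cc where "cc x = (if x = 0 then (1::'a) else 0)" for x :: nat
  have H: "\<And>c. (\<forall>x\<in>{..<m}. \<theta> (c x) = c x) \<Longrightarrow> (\<Sum>x\<in>{..<m}. c x * v x) = 0 \<Longrightarrow> \<forall>x\<in>{..<m}. c x = 0"
    using assms(1) unfolding Fq_indep_def by blast
  have "\<forall>x\<in>{..<m}. cc x = 0"
  proof (rule H)
    show "\<forall>x\<in>{..<m}. \<theta> (cc x) = cc x" by (simp add: cc_def th_0 th_1)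
    show "(\<Sum>x\<in>{..<m}. cc x * v x) = 0" by (intro sum.neutral) (auto simp: v0 cc_def)
  qed
  then have "cc 0 = 0" using assms(2) by blast
  then show False by (simp add: cc_def)
qed

lemma lin_X:
  assumes "\<forall>x\<in>A. \<theta> (lam x) = lam x"
  shows "(\<Sum>x\<in>A. lam x * op_eval \<theta> (pCons (- c) 1) a (w x))
       = op_eval \<theta> (pCons (- c) 1) a (\<Sum>x\<in>A. lam x * w x)"
proof -
  have "(\<Sum>x\<in>A. lam x * op_eval \<theta> (pCons (- c) 1) a (w x))
     = (\<Sum>x\<in>A. - c * (lam x * w x) + \<theta> (lam x * w x) * a)"
    using assms by (intro sum.cong) (simp_all add: op_eval_X th_mult algebra_simps)
  also have "\<dots> = (\<Sum>x\<in>A. - c * (lam x * w x)) + (\<Sum>x\<in>A. \<theta> (lam x * w x) * a)"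
    by (rule sum.distrib)
  also have "\<dots> = - c * (\<Sum>x\<in>A. lam x * w x) + \<theta> (\<Sum>x\<in>A. lam x * w x) * a"
    by (simp only: sum_distrib_left sum_distrib_right th_sum)
  finally show ?thesis by (simp add: op_eval_X)
qed

lemma root_bound:
  fixes \<xi> :: "nat \<Rightarrow> 'a" and b :: "nat \<Rightarrow> nat \<Rightarrow> 'a" and m :: "nat \<Rightarrow> nat"
  assumes xi0: "\<forall>i<l. \<xi> i \<noteq> 0"
    and xid: "\<forall>i<l. \<forall>i'<l. i \<noteq> i' \<longrightarrow> \<not> conjugate \<theta> (\<xi> i) (\<xi> i')"
  shows "g \<noteq> 0 \<Longrightarrow> (\<forall>i<l. Fq_indep \<theta> (b i) {..<m i}) \<Longrightarrow>
    (\<forall>i<l. \<forall>p<m i. op_eval \<theta> g (\<xi> i) (b i p) = 0) \<Longrightarrow> (\<Sum>i<l. m i) \<le> degree g"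
proof (induction "degree g" arbitrary: g m b rule: less_induct)
  case less
  note gnz = less.prems(1) and ind = less.prems(2) and roots = less.prems(3)
  show ?case
  proof (cases "(\<Sum>i<l. m i) = 0")
    case True then show ?thesis by simp
  next
    case False
    have "\<exists>i<l. 0 < m i" by (rule ccontr) (use False in auto)
    then obtain i0 where i0: "i0 < l" "0 < m i0" by auto
    define b0 where "b0 = b i0 0"
    define a1 where "a1 = \<xi> i0"
    have b0: "b0 \<noteq> 0" unfolding b0_def using indep_nz ind i0 by blast
    have a1: "a1 \<noteq> 0" unfolding a1_def using xi0 i0 by blast
    have tb0: "\<theta> b0 \<noteq> 0" using b0 th_eq0 by simp
    define c where "c = \<theta> b0 * a1 * inverse b0"
    let ?X = "pCons (- c) (1::'a poly)"
    obtain h r where hr: "g = skew_mult \<theta> h ?X + [:r:]" using skew_div_lin by blast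
    have Xb0: "op_eval \<theta> ?X a1 b0 = 0"
      using b0 by (simp add: op_eval_X c_def)
    have "op_eval \<theta> g a1 b0 = 0" using roots i0 unfolding a1_def b0_def by blast
    then have "r * b0 = 0" using hr Xb0 by (simp add: op_eval_add op_eval_skew op_eval_const)
    then have r0: "r = 0" using b0 by simp
    have ghX: "g = skew_mult \<theta> h ?X" using hr r0 by simp
    have hnz: "h \<noteq> 0" using gnz ghX by auto
    have Xnz: "?X \<noteq> 0" by simp
    have dg: "degree g = degree h + 1" using skew_degree[OF hnz Xnz] ghX by simp
    define m' where "m' i = (if i = i0 then m i - 1 else m i)" for i
    define b' where "b' i p = op_eval \<theta> ?X (\<xi> i) (b i (if i = i0 then Suc p else p))" for i p
    have roots': "\<forall>i<l. \<forall>p<m' i. op_eval \<theta> h (\<xi> i) (b' i p) = 0"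
    proof (intro allI impI)
      fix i p assume ip: "i < l" "p < m' i"
      let ?p = "if i = i0 then Suc p else p"
      have "?p < m i" using ip unfolding m'_def by (auto split: if_splits)
      then have "op_eval \<theta> g (\<xi> i) (b i ?p) = 0" using roots ip by blast
      then show "op_eval \<theta> h (\<xi> i) (b' i p) = 0"
        unfolding b'_def using ghX by (simp add: op_eval_skew)
    qed
    have ind': "\<forall>i<l. Fq_indep \<theta> (b' i) {..<m' i}"
    proof (intro allI impI)
      fix i assume il: "i < l"
      show "Fq_indep \<theta> (b' i) {..<m' i}"
        unfolding Fq_indep_def
      proof (intro allI impI)
        fix lam assume fix_lam: "\<forall>x\<in>{..<m' i}. \<theta> (lam x) = lam x"
          and sum0: "(\<Sum>x\<in>{..<m' i}. lam x * b' i x) = 0"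
        define W where "W = (\<Sum>x\<in>{..<m' i}. lam x * b i (if i = i0 then Suc x else x))"
        have "(\<Sum>x\<in>{..<m' i}. lam x * b' i x) = op_eval \<theta> ?X (\<xi> i) W"
          unfolding b'_def W_def by (rule lin_X[OF fix_lam])
        then have WX: "- c * W + \<theta> W * \<xi> i = 0" using sum0 by (simp add: op_eval_X)
        show "\<forall>x\<in>{..<m' i}. lam x = 0"
        proof (cases "i = i0")
          case False
          have "W = 0"
          proof (rule ccontr)
            assume Wnz: "W \<noteq> 0"
            have e1: "\<theta> W * \<xi> i = \<theta> b0 * \<xi> i0 * inverse b0 * W"
              using WX unfolding c_def a1_def by algebra
            have "\<theta> (W * inverse b0) * \<xi> i * inverse (W * inverse b0)
                = (\<theta> W * \<xi> i) * inverse (\<theta> b0) * inverse W * b0"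
              by (simp add: th_mult th_inv inverse_mult_distrib mult_ac)
            also have "\<dots> = \<xi> i0 * (\<theta> b0 * inverse (\<theta> b0)) * (W * inverse W) * (b0 * inverse b0)"
              unfolding e1 by (simp only: mult_ac)
            also have "\<dots> = \<xi> i0" using Wnz b0 tb0 by simp
            finally have e2: "\<theta> (W * inverse b0) * \<xi> i * inverse (W * inverse b0) = \<xi> i0" .
            have nz: "W * inverse b0 \<noteq> 0" using Wnz b0 by simp
            have "conjugate \<theta> (\<xi> i) (\<xi> i0)"
              unfolding conjugate_def using nz e2[symmetric] by blast
            then show False using xid il i0 False by blast
          qed
          have Hi: "Fq_indep \<theta> (b i) {..<m i}" using ind il by blast
          have mi: "m' i = m i" using False unfolding m'_def by simp
          have W0: "(\<Sum>x\<in>{..<m i}. lam x * b i x) = 0" using \<open>W = 0\<close> False mi unfolding W_def by simp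
          have fl: "\<forall>x\<in>{..<m i}. \<theta> (lam x) = lam x" using fix_lam mi by simp
          show ?thesis using spec[OF Hi[unfolded Fq_indep_def], of lam] fl W0 mi by simp
        next
          case True
          obtain n' where mn: "m i0 = Suc n'" using i0 by (cases "m i0") auto
          have m'i: "m' i = n'" using True mn unfolding m'_def by simp
          define mu where "mu = W * inverse b0"
          have TW: "\<theta> W = \<theta> b0 * inverse b0 * W"
          proof -
            have "\<theta> W * a1 = (\<theta> b0 * inverse b0 * W) * a1"
              using WX unfolding True c_def a1_def by algebra
            then show ?thesis using a1 by simp
          qed
          have tmu: "\<theta> mu = mu"
          proof -
            have "\<theta> mu = (\<theta> b0 * inverse (\<theta> b0)) * W * inverse b0"
              unfolding mu_def by (simp add: th_mult th_inv TW mult_ac)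
            then show ?thesis using tb0 unfolding mu_def by simp
          qed
          define cc where "cc x = (if x = 0 then - mu else lam (x - 1))" for x
          have ccfix: "\<forall>x\<in>{..<m i0}. \<theta> (cc x) = cc x"
            using fix_lam tmu m'i mn unfolding cc_def by (auto simp: th_neg)
          have "(\<Sum>x\<in>{..<m i0}. cc x * b i0 x) = cc 0 * b i0 0 + (\<Sum>x\<in>{..<n'}. cc (Suc x) * b i0 (Suc x))"
            unfolding mn lessThan_atLeast0 by (simp add: sum.atLeast0_lessThan_Suc_shift del: sum.op_ivl_Suc)
          also have "\<dots> = - W + W"
            unfolding cc_def mu_def W_def using True m'i b0 b0_def by simp
          finally have "(\<Sum>x\<in>{..<m i0}. cc x * b i0 x) = 0" by simp
          note sumcc = this
          have Hi: "Fq_indep \<theta> (b i0) {..<m i0}" using ind i0 by blast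
          have "\<forall>x\<in>{..<m i0}. cc x = 0" using spec[OF Hi[unfolded Fq_indep_def], of cc] ccfix sumcc by blast
          then show ?thesis using m'i mn True unfolding cc_def by force
        qed
      qed
    qed
    have "(\<Sum>i<l. m' i) \<le> degree h"
      by (rule less.hyps) (use dg hnz ind' roots' in auto)
    moreover have "(\<Sum>i<l. m i) = (\<Sum>i<l. m' i) + 1"
    proof -
      have "(\<Sum>i<l. m i) = m i0 + (\<Sum>i\<in>{..<l} - {i0}. m i)"
        using i0 by (simp add: sum.remove)
      moreover have "(\<Sum>i<l. m' i) = m' i0 + (\<Sum>i\<in>{..<l} - {i0}. m' i)"
        using i0 by (simp add: sum.remove)
      moreover have "(\<Sum>i\<in>{..<l} - {i0}. m' i) = (\<Sum>i\<in>{..<l} - {i0}. m i)"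
        unfolding m'_def by (intro sum.cong) auto
      ultimately show ?thesis using i0 unfolding m'_def by simp
    qed
    ultimately show ?thesis using dg by simp
  qed
qed

end

theorem lemma2:
  fixes \<theta> :: "'a::{field,finite} \<Rightarrow> 'a"
    and s l n k t :: nat and nn :: "nat \<Rightarrow> nat"
    and \<xi> :: "nat \<Rightarrow> 'a"
    and \<beta> c e y :: "nat \<Rightarrow> nat \<Rightarrow> nat \<Rightarrow> 'a"
    and f G R \<chi> :: "nat \<Rightarrow> 'a poly"
    and \<sigma> :: "'a poly"
    and a :: "nat \<Rightarrow> nat \<Rightarrow> 'a"
    and B :: "nat \<Rightarrow> nat \<Rightarrow> nat \<Rightarrow> nat \<Rightarrow> 'a"
  assumes aut: "field_aut \<theta>"
    and s: "s \<ge> 1"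
    and xi_nontriv: "\<forall>i<l. \<xi> i \<noteq> 0"
    and xi_distinct: "\<forall>i<l. \<forall>i'<l. i \<noteq> i' \<longrightarrow> \<not> conjugate \<theta> (\<xi> i) (\<xi> i')"
    and part: "\<forall>i<l. nn i > 0" "n = (\<Sum>i<l. nn i)"
    and beta_indep: "\<forall>j<s. \<forall>i<l. Fq_indep \<theta> (\<beta> j i) {..<nn i}"
    and f_deg: "\<forall>j<s. f j = 0 \<or> degree (f j) < k"
    and codeword: "\<forall>j<s. \<forall>i<l. \<forall>p<nn i. c j i p = op_eval \<theta> (f j) (\<xi> i) (\<beta> j i p)"
    and received: "\<forall>j<s. \<forall>i<l. \<forall>p<nn i. y j i p = c j i p + e j i p"
    and wt: "sumrank_wt \<theta> s l nn e = t"
    and t_bound: "real t \<le> real s / real (s + 1) * (real n - real k)"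
    and a_indep: "\<forall>i<l. Fq_indep \<theta> (a i) {..<block_rank \<theta> s nn e i}"
    and B_Fq: "\<forall>i<l. \<forall>j<s. \<forall>r<block_rank \<theta> s nn e i. \<forall>p<nn i. \<theta> (B j i r p) = B j i r p"
    and e_decomp: "\<forall>i<l. \<forall>j<s. \<forall>p<nn i.
        e j i p = (\<Sum>r<block_rank \<theta> s nn e i. a i r * B j i r p)"
    and B_rank: "\<forall>i<l. mat_rank_Fq \<theta> (\<lambda>r (j, p). B j i r p) (block_rank \<theta> s nn e i)
        ({..<s} \<times> {..<nn i}) = block_rank \<theta> s nn e i"
    and sigma_monic: "\<sigma> \<noteq> 0" "lead_coeff \<sigma> = 1"
    and sigma_ann: "\<forall>i<l. \<forall>r<block_rank \<theta> s nn e i. op_eval \<theta> \<sigma> (\<xi> i) (a i r) = 0"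
    and sigma_min: "\<forall>g. g \<noteq> 0 \<and> (\<forall>i<l. \<forall>r<block_rank \<theta> s nn e i. op_eval \<theta> g (\<xi> i) (a i r) = 0)
        \<longrightarrow> degree \<sigma> \<le> degree g"
    and G_monic: "\<forall>j<s. G j \<noteq> 0 \<and> lead_coeff (G j) = 1"
    and G_ann: "\<forall>j<s. \<forall>i<l. \<forall>p<nn i. op_eval \<theta> (G j) (\<xi> i) (\<beta> j i p) = 0"
    and G_min: "\<forall>j<s. \<forall>g. g \<noteq> 0 \<and> (\<forall>i<l. \<forall>p<nn i. op_eval \<theta> g (\<xi> i) (\<beta> j i p) = 0)
        \<longrightarrow> degree (G j) \<le> degree g"
    and R_deg: "\<forall>j<s. R j = 0 \<or> degree (R j) < n"
    and R_int: "\<forall>j<s. \<forall>i<l. \<forall>p<nn i. op_eval \<theta> (R j) (\<xi> i) (\<beta> j i p) = y j i p"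
    and chi_def: "\<forall>j<s. skew_mult \<theta> \<sigma> (f j) = skew_mult \<theta> (\<chi> j) (G j) + skew_mult \<theta> \<sigma> (R j)"
  shows
    "let \<rho> = map (\<lambda>j. skew_mult \<theta> \<sigma> (f j)) [0..<s] @ [\<sigma>];
         \<chi>s = map \<chi> [0..<s];
         W = Wmat s R G;
         w = replicate s 0 @ [int k - 1];
         v = replicate s 0 @ [int k - 1] @ replicate s 0;
         D = real s / real (s + 1) * (real n - real k);
         d = D + real n
     in (vec_mat \<theta> (\<rho> @ \<chi>s) W s = replicate s 0 \<and> rdeg w \<rho> < ereal D)
        \<longleftrightarrow> ((\<forall>p\<in>set (vec_mat \<theta> (\<rho> @ \<chi>s) W s). mod_r_zero \<theta> p (nat \<lceil>d\<rceil>))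
             \<and> rdeg v (\<rho> @ \<chi>s) < ereal D)"
proof -
  let ?\<rho> = "map (\<lambda>j. skew_mult \<theta> \<sigma> (f j)) [0..<s] @ [\<sigma>]"
  let ?r = "?\<rho> @ map \<chi> [0..<s]"
  let ?w = "replicate s 0 @ [int k - 1]"
  let ?v = "replicate s 0 @ [int k - 1] @ replicate s 0"
  define D where "D = real s / real (s + 1) * (real n - real k)"
  have lr: "length ?r = 2 * s + 1" by simp
  have r_lo: "?r ! i = skew_mult \<theta> \<sigma> (f i)" if "i < s" for i
    using that by (simp add: nth_append)
  have r_s: "?r ! s = \<sigma>" by (simp add: nth_append)
  have r_hi: "?r ! i = \<chi> (i - s - 1)" if "s < i" "i < 2 * s + 1" for i
    using that by (simp add: nth_append)
  have col0: "(\<Sum>i<length ?r. skew_mult \<theta> (?r ! i) (Wmat s R G i j)) = 0" if j: "j < s" for j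
  proof -
    have pt: "skew_mult \<theta> (?r ! i) (Wmat s R G i j) =
       (if i = j then - skew_mult \<theta> \<sigma> (f j) else 0) + (if i = s then skew_mult \<theta> \<sigma> (R j) else 0)
       + (if i = s + 1 + j then skew_mult \<theta> (\<chi> j) (G j) else 0)" if i: "i < 2 * s + 1" for i
    proof -
      consider "i < s" | "i = s" | "s < i" by linarith
      then show ?thesis
      proof cases
        case 1 then show ?thesis using j r_lo[OF 1]
          by (auto simp: Wmat_def skew_neg1[OF aut] skew_0_right[OF aut])
      next
        case 2 then show ?thesis using j r_s by (auto simp: Wmat_def)
      next
        case 3 then show ?thesis using j r_hi[OF 3 i]
          by (auto simp: Wmat_def skew_0_right[OF aut])
      qed
    qed
    have "(\<Sum>i<length ?r. skew_mult \<theta> (?r ! i) (Wmat s R G i j)) =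
       (\<Sum>i<2 * s + 1. (if i = j then - skew_mult \<theta> \<sigma> (f j) else 0) + (if i = s then skew_mult \<theta> \<sigma> (R j) else 0)
       + (if i = s + 1 + j then skew_mult \<theta> (\<chi> j) (G j) else 0))"
      unfolding lr by (rule sum.cong[OF refl], rule pt) simp
    also have "\<dots> = - skew_mult \<theta> \<sigma> (f j) + skew_mult \<theta> \<sigma> (R j) + skew_mult \<theta> (\<chi> j) (G j)"
      using j by (simp add: sum.distrib)
    also have "\<dots> = 0" using chi_def j by simp
    finally show ?thesis .
  qed
  have V: "vec_mat \<theta> ?r (Wmat s R G) s = replicate s 0"
    unfolding vec_mat_def
  proof (rule nth_equalityI)
    fix i assume "i < length (map (\<lambda>j. \<Sum>i<length ?r. skew_mult \<theta> (?r ! i) (Wmat s R G i j)) [0..<s])"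
    then have i: "i < s" by simp
    show "map (\<lambda>j. \<Sum>i<length ?r. skew_mult \<theta> (?r ! i) (Wmat s R G i j)) [0..<s] ! i = replicate s 0 ! i"
      using col0[OF i] i by simp
  qed simp
  have M: "\<forall>p\<in>set (vec_mat \<theta> ?r (Wmat s R G) s). mod_r_zero \<theta> p N" for N
    unfolding V mod_r_zero_def by (auto intro!: exI[of _ 0] simp: skew_0_left[OF aut])
  have Gdeg: "n \<le> degree (G j)" if "j < s" for j
  proof -
    have "(\<Sum>i<l. nn i) \<le> degree (G j)"
      by (rule root_bound[OF aut, of l \<xi> "G j" "\<beta> j" nn]) (use that xi_nontriv xi_distinct beta_indep G_ann G_monic in blast)+
    then show ?thesis using part(2) by simp
  qed
  have chideg: "int (degree (\<chi> j)) \<le> int (degree \<sigma>) + (int k - 1)" if j: "j < s" "\<chi> j \<noteq> 0" for j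
  proof -
    have Gnz: "G j \<noteq> 0" using G_monic j by blast
    have "skew_mult \<theta> \<sigma> (f j) = skew_mult \<theta> \<sigma> ((f j - R j) + R j)" by simp
    then have "skew_mult \<theta> \<sigma> (f j) = skew_mult \<theta> \<sigma> (f j - R j) + skew_mult \<theta> \<sigma> (R j)"
      by (simp only: skew_add_right[OF aut])
    then have eq: "skew_mult \<theta> (\<chi> j) (G j) = skew_mult \<theta> \<sigma> (f j - R j)" using chi_def j by simp
    have d1: "skew_mult \<theta> (\<chi> j) (G j) \<noteq> 0" "degree (skew_mult \<theta> (\<chi> j) (G j)) = degree (\<chi> j) + degree (G j)"
      using skew_degree[OF aut j(2) Gnz] by auto
    have fR: "f j - R j \<noteq> 0" using d1(1) eq skew_0_right[OF aut] by metis
    have d2: "degree (skew_mult \<theta> \<sigma> (f j - R j)) = degree \<sigma> + degree (f j - R j)"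
      using skew_degree[OF aut sigma_monic(1) fR] by auto
    have sum_le: "degree (\<chi> j) + n \<le> degree \<sigma> + degree (f j - R j)"
      using d1(2) d2 eq Gdeg[OF j(1)] by simp
    have "degree (f j - R j) < k \<or> degree (f j - R j) < n"
    proof (cases "f j = 0")
      case True
      then have "R j \<noteq> 0" using fR by simp
      then show ?thesis using R_deg j True by (auto simp: degree_minus)
    next
      case False
      then have fk: "degree (f j) < k" using f_deg j by blast
      show ?thesis
      proof (cases "R j = 0")
        case True then show ?thesis using fk by simp
      next
        case False
        then have "degree (R j) < n" using R_deg j by blast
        then show ?thesis using fk degree_diff_le_max[of "f j" "R j"] by linarith
      qed
    qed
    then show ?thesis using sum_le by linarith
  qed
  have rdeg_less: "rdeg u b < x \<longleftrightarrow> (\<forall>j<length b. (if b ! j = 0 then -\<infinity> else ereal (of_int (int (degree (b ! j)) + u ! j))) < x)"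
    if "0 < length b" for u and b :: "'a poly list" and x
    unfolding rdeg_def using that by (subst Max_less_iff) auto
  have split_all: "(\<forall>j<a + b. P j) \<longleftrightarrow> (\<forall>j<a. P j) \<and> (\<forall>j<b. P (a + j))" for a b and P :: "nat \<Rightarrow> bool"
  proof
    assume H: "\<forall>j<a + b. P j" then show "(\<forall>j<a. P j) \<and> (\<forall>j<b. P (a + j))" by simp
  next
    assume H: "(\<forall>j<a. P j) \<and> (\<forall>j<b. P (a + j))"
    show "\<forall>j<a + b. P j"
    proof (intro allI impI)
      fix j assume jab: "j < a + b"
      show "P j"
      proof (cases "j < a")
        case True then show ?thesis using H by blast
      next
        case False
        then have "j = a + (j - a)" "j - a < b" using jab by auto
        then show ?thesis using H by metis
      qed
    qed
  qed
  let ?T = "\<lambda>u b j. (if b ! j = 0 then -\<infinity> else ereal (of_int (int (degree (b ! j)) + u ! j)))"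
  have Tr: "?T ?v ?r j = ?T ?w ?\<rho> j" if "j < s + 1" for j
    using that by (simp add: nth_append del: append_Cons append.assoc)
  have Tr2: "?T ?v ?r (s + 1 + j) = (if \<chi> j = 0 then -\<infinity> else ereal (of_int (int (degree (\<chi> j)))))" if "j < s" for j
    using that by (simp add: nth_append)
  have rv: "rdeg ?v ?r < ereal D \<longleftrightarrow> rdeg ?w ?\<rho> < ereal D \<and> (\<forall>j<s. ?T ?v ?r (s + 1 + j) < ereal D)"
  proof -
    have "rdeg ?v ?r < ereal D \<longleftrightarrow> (\<forall>j<(s + 1) + s. ?T ?v ?r j < ereal D)"
      by (subst rdeg_less) (simp_all add: algebra_simps)
    also have "\<dots> \<longleftrightarrow> (\<forall>j<s + 1. ?T ?v ?r j < ereal D) \<and> (\<forall>j<s. ?T ?v ?r (s + 1 + j) < ereal D)"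
      by (rule split_all)
    also have "(\<forall>j<s + 1. ?T ?v ?r j < ereal D) \<longleftrightarrow> (\<forall>j<s + 1. ?T ?w ?\<rho> j < ereal D)"
      using Tr by auto
    also have "\<dots> \<longleftrightarrow> rdeg ?w ?\<rho> < ereal D"
      by (subst rdeg_less) simp_all
    finally show ?thesis .
  qed
  have key: "rdeg ?w ?\<rho> < ereal D \<Longrightarrow> (\<forall>j<s. ?T ?v ?r (s + 1 + j) < ereal D)"
  proof (intro allI impI)
    fix j assume A: "rdeg ?w ?\<rho> < ereal D" and j: "j < s"
    have all: "\<forall>j<length ?\<rho>. ?T ?w ?\<rho> j < ereal D" using rdeg_less[of ?\<rho> ?w "ereal D"] A by simp
    have "?T ?w ?\<rho> s < ereal D" using all[rule_format, of s] by simp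
    then have sD: "ereal (of_int (int (degree \<sigma>) + (int k - 1))) < ereal D"
      using sigma_monic(1) by (simp add: nth_append)
    show "?T ?v ?r (s + 1 + j) < ereal D"
    proof (cases "\<chi> j = 0")
      case True then show ?thesis using Tr2[OF j] by simp
    next
      case False
      have "ereal (of_int (int (degree (\<chi> j)))) \<le> ereal (of_int (int (degree \<sigma>) + (int k - 1)))"
        using chideg[OF j False] by simp
      then show ?thesis using Tr2[OF j] False sD by simp
    qed
  qed
  show ?thesis
    unfolding Let_def D_def[symmetric]
    using V M rv key by blast
qed

end
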